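(* Let $g\in C(\mathcal{X},\mathbb{R}^{N_{2}})$. For any $\epsilon>0$ there exists a sampled network $\Phi$ with one hidden layer (of some finite width) and ReLU activation such that $\sup_{x\in\mathcal{X}}\|g(x)-\Phi(x)\|<\epsilon$. That is, the set of all such sampled networks is dense in $C(\mathcal{X},\mathbb{R}^{N_2})$ in the uniform norm.
   Context: Fix $D\ge1$, Euclidean norm and inner product on $\mathbb{R}^D$, $\phi(t)=\max\{t,0\}$. For $A\subseteq\mathbb{R}^D$ let $d(z,A)=\inf_{a\in A}\|z-a\|$, $\mathrm{Med}(A)=\{z:\exists p\neq q\in A,\ \|p-z\|=\|q-z\|=d(z,A)\}$, reach $\tau_A=\inf_{a\in A}d(a,\mathrm{Med}(A))$. Let $\mathcal{X}'\subset\mathbb{R}^D$ be nonempty compact with $\tau_{\mathcal{X}'}>0$, fix $0<\epsilon_I<\min\{\tau_{\mathcal{X}'},1\}$, and $\mathcal{X}=\{x:d(x,\mathcal{X}')\le\epsilon_I\}$. A sampled network with one hidden layer of $N_1$ neurons and ReLU activation is $\Phi(x)=\sum_{i=1}^{N_1}w_{2,i}\phi(\langle w_{1,i},x\rangle-b_{1,i})-b_2$ where for each $i$ there are distinct points $x^{(1)}_{0,i},x^{(2)}_{0,i}\in\mathcal{X}$ with $w_{1,i}=\frac{x^{(2)}_{0,i}-x^{(1)}_{0,i}}{\|x^{(2)}_{0,i}-x^{(1)}_{0,i}\|^2}$ and $b_{1,i}=\langle w_{1,i},x^{(1)}_{0,i}\rangle$; the output parameters $w_{2,i}\in\mathbb{R}^{N_2}$,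 $b_2\in\mathbb{R}^{N_2}$ are unrestricted. *)

theory Defs
  imports "HOL-Analysis.Analysis"
begin

definition relu :: "real \<Rightarrow> real" where
  "relu t = max t 0"

definition medial_axis :: "('a::real_normed_vector) set \<Rightarrow> 'a set" where
  "medial_axis A = {z. \<exists>p q. p \<in> A \<and> q \<in> A \<and> p \<noteq> q \<and>
      norm (p - z) = infdist z A \<and> norm (q - z) = infdist z A}"

text \<open>Reach, valued in the extended reals so that an empty medial axis gives reach infinity
  (infimum over the empty set).\<close>
definition reach :: "('a::real_normed_vector) set \<Rightarrow> ereal" where
  "reach A = (INF a\<in>A. (INF z\<in>medial_axis A. ereal (norm (a - z))))"

definition sampled_net ::
  "nat \<Rightarrow> (nat \<Rightarrow> real^'d) \<Rightarrow> (nat \<Rightarrow> real^'d) \<Rightarrow> (nat \<Rightarrow> real^'m) \<Rightarrow> real^'m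
     \<Rightarrow> real^'d \<Rightarrow> real^'m" where
  "sampled_net N1 x1 x2 w2 b2 = (\<lambda>x.
     (\<Sum>i<N1. let w1 = (x2 i - x1 i) /\<^sub>R (norm (x2 i - x1 i))\<^sup>2;
                  b1 = inner w1 (x1 i)
              in relu (inner w1 x - b1) *\<^sub>R w2 i) - b2)"

definition is_sampled_network :: "(real^'d) set \<Rightarrow> (real^'d \<Rightarrow> real^'m) \<Rightarrow> bool" where
  "is_sampled_network X \<Phi> \<longleftrightarrow> (\<exists>N1 x1 x2 w2 b2.
      (\<forall>i<N1. x1 i \<in> X \<and> x2 i \<in> X \<and> x1 i \<noteq> x2 i) \<and>
      \<Phi> = sampled_net N1 x1 x2 w2 b2)"

end

theory Submission
  imports Defs
begin

definition neuron :: "real^'d \<Rightarrow> real^'d \<Rightarrow> real^'m \<Rightarrow> real^'d \<Rightarrow> real^'m" where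
  "neuron q1 q2 v = (\<lambda>x. let w1 = (q2 - q1) /\<^sub>R (norm (q2 - q1))\<^sup>2;
                  b1 = inner w1 q1
              in relu (inner w1 x - b1) *\<^sub>R v)"

inductive_set NN :: "(real^'d) set \<Rightarrow> (real^'d \<Rightarrow> real^'m) set" for X where
  cst: "(\<lambda>_. c) \<in> NN X"
| neu: "q1 \<in> X \<Longrightarrow> q2 \<in> X \<Longrightarrow> q1 \<noteq> q2 \<Longrightarrow> neuron q1 q2 v \<in> NN X"
| add: "f \<in> NN X \<Longrightarrow> g \<in> NN X \<Longrightarrow> (\<lambda>x. f x + g x) \<in> NN X"

lemma sampled_net_alt: "sampled_net N1 x1 x2 w2 b2 = (\<lambda>x. (\<Sum>i<N1. neuron (x1 i) (x2 i) (w2 i) x) - b2)"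
  unfolding sampled_net_def neuron_def by simp

lemma NN_sampled:
  assumes "f \<in> NN X" shows "is_sampled_network X f"
  using assms
proof induction
  case (cst c)
  show ?case unfolding is_sampled_network_def
    by (rule exI[of _ 0], rule exI, rule exI, rule exI, rule exI[of _ "-c"]) (simp add: sampled_net_alt)
next
  case (neu q1 q2 v)
  show ?case unfolding is_sampled_network_def
    apply (rule exI[of _ 1], rule exI[of _ "\<lambda>_. q1"], rule exI[of _ "\<lambda>_. q2"], rule exI[of _ "\<lambda>_. v"], rule exI[of _ 0])
    using neu by (simp add: sampled_net_alt)
next
  case (add f g)
  from add(3) obtain N x1 x2 w2 b2 where A: "\<forall>i<N. x1 i \<in> X \<and> x2 i \<in> X \<and> x1 i \<noteq> x2 i" "f = sampled_net N x1 x2 w2 b2"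
    unfolding is_sampled_network_def by blast
  from add(4) obtain M y1 y2 v2 c2 where B: "\<forall>i<M. y1 i \<in> X \<and> y2 i \<in> X \<and> y1 i \<noteq> y2 i" "g = sampled_net M y1 y2 v2 c2"
    unfolding is_sampled_network_def by blast
  define z1 where "z1 i = (if i < N then x1 i else y1 (i - N))" for i
  define z2 where "z2 i = (if i < N then x2 i else y2 (i - N))" for i
  define u2 where "u2 i = (if i < N then w2 i else v2 (i - N))" for i
  have sumsplit: "(\<Sum>i<N+M. F i) = (\<Sum>i<N. F i) + (\<Sum>i<M. F (i + N))" for F :: "nat \<Rightarrow> real^'m"
  proof -
    have "(\<Sum>i<N+M. F i) = (\<Sum>i\<in>{0..<N}. F i) + (\<Sum>i\<in>{N..<N+M}. F i)"
      by (simp add: sum.atLeastLessThan_concat lessThan_atLeast0)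
    also have "(\<Sum>i\<in>{N..<N+M}. F i) = (\<Sum>i\<in>{0..<M}. F (i + N))"
      using sum.shift_bounds_nat_ivl[of F 0 N M] by (simp add: add.commute)
    finally show ?thesis by (simp add: lessThan_atLeast0)
  qed
  have "(\<lambda>x. f x + g x) = sampled_net (N+M) z1 z2 u2 (b2 + c2)"
    unfolding A(2) B(2) sampled_net_alt sumsplit
    by (auto simp: z1_def z2_def u2_def algebra_simps)
  moreover have "\<forall>i<N+M. z1 i \<in> X \<and> z2 i \<in> X \<and> z1 i \<noteq> z2 i"
    using A(1) B(1) by (auto simp: z1_def z2_def)
  ultimately show ?case unfolding is_sampled_network_def by blast
qed

lemma NN_scale: "f \<in> NN X \<Longrightarrow> (\<lambda>x. r *\<^sub>R f x) \<in> NN X"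
proof (induction rule: NN.induct)
  case (cst c) then show ?case using NN.cst by blast
next
  case (neu q1 q2 v)
  have "(\<lambda>x. r *\<^sub>R neuron q1 q2 v x) = neuron q1 q2 (r *\<^sub>R v)"
    by (auto simp: neuron_def Let_def)
  then show ?case using NN.neu[OF neu] by simp
next
  case (add f g) then show ?case using NN.add[OF add(3,4)] by (simp add: scaleR_right_distrib)
qed

lemma NN_sum: "finite I \<Longrightarrow> (\<And>j. j \<in> I \<Longrightarrow> F j \<in> NN X) \<Longrightarrow> (\<lambda>x. \<Sum>j\<in>I. F j x) \<in> NN X"
proof (induction I rule: finite_induct)
  case empty then show ?case using NN.cst[of 0] by simp
next
  case (insert a I) then show ?case using NN.add[of "F a" X "\<lambda>x. \<Sum>j\<in>I. F j x"] by simp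
qed


inductive_set SN :: "(real^'d) set \<Rightarrow> (real^'d \<Rightarrow> real) set" for X where
  cst: "(\<lambda>_. c) \<in> SN X"
| neu: "q1 \<in> X \<Longrightarrow> q2 \<in> X \<Longrightarrow> q1 \<noteq> q2 \<Longrightarrow>
    (\<lambda>x. a * relu (inner ((q2 - q1) /\<^sub>R (norm (q2 - q1))\<^sup>2) x - inner ((q2 - q1) /\<^sub>R (norm (q2 - q1))\<^sup>2) q1)) \<in> SN X"
| add: "f \<in> SN X \<Longrightarrow> g \<in> SN X \<Longrightarrow> (\<lambda>x. f x + g x) \<in> SN X"

lemma SN_NN: "f \<in> SN X \<Longrightarrow> (\<lambda>x. f x *\<^sub>R v) \<in> NN X"
proof (induction rule: SN.induct)
  case (cst c) then show ?case using NN.cst by blast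
next
  case (neu q1 q2 a)
  have "(\<lambda>x. (a * relu (inner ((q2 - q1) /\<^sub>R (norm (q2 - q1))\<^sup>2) x - inner ((q2 - q1) /\<^sub>R (norm (q2 - q1))\<^sup>2) q1)) *\<^sub>R v)
     = neuron q1 q2 (a *\<^sub>R v)"
    by (auto simp: neuron_def Let_def)
  then show ?case using NN.neu[OF neu] by simp
next
  case (add f g) then show ?case using NN.add[OF add(3,4)] by (simp add: scaleR_left_distrib)
qed

lemma SN_scale: "f \<in> SN X \<Longrightarrow> (\<lambda>x. r * f x) \<in> SN X"
proof (induction rule: SN.induct)
  case (cst c) then show ?case using SN.cst by blast
next
  case (neu q1 q2 a)
  then show ?case using SN.neu[OF neu, of "r*a"] by (simp add: mult.assoc)
next
  case (add f g) then show ?case using SN.add[OF add(3,4)] by (simp add: distrib_left)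
qed

lemma SN_diff: "f \<in> SN X \<Longrightarrow> g \<in> SN X \<Longrightarrow> (\<lambda>x. f x - g x) \<in> SN X"
  using SN.add[of f X "\<lambda>x. (-1) * g x"] SN_scale[of g X "-1"] by simp

lemma SN_addc: "f \<in> SN X \<Longrightarrow> (\<lambda>x. f x + c) \<in> SN X"
  using SN.add[OF _ SN.cst] by blast

lemma relu_div: "c > 0 \<Longrightarrow> relu (a / c) = relu a / c"
  by (auto simp: relu_def max_def divide_le_0_iff)

lemma relu_scale: "c > 0 \<Longrightarrow> relu (c * a) = c * relu a"
  by (auto simp: relu_def max_def mult_le_0_iff)

lemma relu_neg: "relu a = relu (- a) + a"
  by (auto simp: relu_def max_def)

lemma SN_N:
  assumes "q \<in> X" "q + v \<in> X" "v \<noteq> 0"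
  shows "(\<lambda>x. relu (inner v (x - q))) \<in> SN X"
proof -
  have nv: "(norm v)\<^sup>2 > 0" using assms(3) by simp
  have "(\<lambda>x. (norm v)\<^sup>2 * relu (inner ((q + v - q) /\<^sub>R (norm (q + v - q))\<^sup>2) x - inner ((q + v - q) /\<^sub>R (norm (q + v - q))\<^sup>2) q)) \<in> SN X"
    using SN.neu[of q X "q+v" "(norm v)\<^sup>2"] assms by simp
  moreover have "(norm v)\<^sup>2 * relu (inner ((q + v - q) /\<^sub>R (norm (q + v - q))\<^sup>2) x - inner ((q + v - q) /\<^sub>R (norm (q + v - q))\<^sup>2) q)
     = relu (inner v (x - q))" for x
  proof -
    have "inner ((q + v - q) /\<^sub>R (norm (q + v - q))\<^sup>2) x - inner ((q + v - q) /\<^sub>R (norm (q + v - q))\<^sup>2) q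
        = inner v (x - q) / (norm v)\<^sup>2"
      by (simp add: inner_diff_right divide_simps)
    then show ?thesis using relu_div[OF nv, of "inner v (x - q)"] nv by simp
  qed
  ultimately show ?thesis by simp
qed

lemma norm_step:
  fixes q p w :: "real^'d"
  shows "(norm (q + t *\<^sub>R w - p))\<^sup>2 = (norm (q - p))\<^sup>2 + 2 * t * inner w (q - p) + t\<^sup>2 * (norm w)\<^sup>2"
proof -
  have "q + t *\<^sub>R w - p = (q - p) + t *\<^sub>R w" by simp
  then show ?thesis
    by (simp only: power2_norm_eq_inner) (simp add: inner_add_left inner_add_right inner_commute power2_eq_square algebra_simps)
qed

lemma in_cball_sq:
  fixes y p :: "real^'d"
  assumes "(norm (y - p))\<^sup>2 \<le> (norm (q - p))\<^sup>2" "q \<in> cball p r"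
  shows "y \<in> cball p r"
proof -
  have "norm (y - p) \<le> norm (q - p)" using assms(1) by (simp add: power2_le_iff_abs_le)
  then show ?thesis using assms(2) by (simp add: dist_norm norm_minus_commute)
qed

definition goodX :: "(real^'d) set \<Rightarrow> bool" where
  "goodX X \<longleftrightarrow> (\<forall>q\<in>X. \<exists>p r. r > 0 \<and> q \<in> cball p r \<and> cball p r \<subseteq> X)"

lemma SN_aff:
  assumes "goodX X" "X \<noteq> {}"
  shows "(\<lambda>x. inner w x) \<in> SN X"
proof (cases "w = 0")
  case True then show ?thesis using SN.cst[of 0] by simp
next
  case False
  obtain q where "q \<in> X" using assms(2) by auto
  then obtain p r where pr: "r > 0" "cball p r \<subseteq> X" using assms(1) unfolding goodX_def by blast
  define s where "s = r / norm w"
  have s: "s > 0" using pr False by (simp add: s_def)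
  have n: "norm (s *\<^sub>R w) = r" using False pr by (simp add: s_def)
  have "p + s *\<^sub>R w \<in> X" "p + (- (s *\<^sub>R w)) \<in> X" "p \<in> X" using pr n by (auto simp: dist_norm)
  then have 1: "(\<lambda>x. relu (inner (s *\<^sub>R w) (x - p))) \<in> SN X" and 2: "(\<lambda>x. relu (inner (- (s *\<^sub>R w)) (x - p))) \<in> SN X"
    using SN_N[of p X "s *\<^sub>R w"] SN_N[of p X "- (s *\<^sub>R w)"] False s by (metis neg_equal_0_iff_equal scale_eq_0_iff less_irrefl)+
  have "(\<lambda>x. (1/s) * (relu (inner (s *\<^sub>R w) (x - p)) - relu (inner (- (s *\<^sub>R w)) (x - p))) + inner w p) \<in> SN X"
    by (intro SN_addc SN_scale SN_diff 1 2)
  moreover have "(1/s) * (relu (inner (s *\<^sub>R w) (x - p)) - relu (inner (- (s *\<^sub>R w)) (x - p))) + inner w p = inner w x" for x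
    using relu_neg[of "inner (s *\<^sub>R w) (x - p)"] s by (simp add: inner_diff_right field_simps)
  ultimately show ?thesis by simp
qed

lemma SN_K:
  assumes "goodX X" "q \<in> X"
  shows "(\<lambda>x. relu (inner w x - inner w q)) \<in> SN X"
proof (cases "w = 0")
  case True then show ?thesis using SN.cst[of 0] by (simp add: relu_def)
next
  case False
  obtain p r where pr: "r > 0" "q \<in> cball p r" "cball p r \<subseteq> X" using assms unfolding goodX_def by blast
  have nw: "(norm w)\<^sup>2 > 0" using False by simp
  define d where "d = inner w (q - p)"
  consider "d = 0" | "d < 0" | "d > 0" by linarith
  then show ?thesis
  proof cases
    case 1
    define s where "s = r / norm w"
    have s: "s > 0" using pr False by (simp add: s_def)
    have n: "norm (s *\<^sub>R w) = r" using False pr by (simp add: s_def)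
    have "p + s *\<^sub>R w \<in> X" "p \<in> X" using pr n by (auto simp: dist_norm)
    then have "(\<lambda>x. relu (inner (s *\<^sub>R w) (x - p))) \<in> SN X" using SN_N[of p X "s *\<^sub>R w"] False s by (metis scale_eq_0_iff less_irrefl)
    then have "(\<lambda>x. (1/s) * relu (inner (s *\<^sub>R w) (x - p))) \<in> SN X" by (rule SN_scale)
    moreover have "(1/s) * relu (inner (s *\<^sub>R w) (x - p)) = relu (inner w x - inner w q)" for x
    proof -
      have "inner w q = inner w p" using 1 by (simp add: d_def inner_diff_right)
      then show ?thesis using relu_scale[OF s, of "inner w x - inner w p"] s by (simp add: inner_diff_right right_diff_distrib)
    qed
    ultimately show ?thesis by simp
  next
    case 2
    define t where "t = - d / (norm w)\<^sup>2"
    have t: "t > 0" using 2 nw by (simp add: t_def divide_neg_pos)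
    have "(norm (q + t *\<^sub>R w - p))\<^sup>2 = (norm (q - p))\<^sup>2 + t * d"
      unfolding norm_step using nw by (simp add: t_def d_def power2_eq_square field_simps)
    also have "\<dots> \<le> (norm (q - p))\<^sup>2" using t 2 mult_pos_neg[of t d] by simp
    finally have "q + t *\<^sub>R w \<in> X" using in_cball_sq[OF _ pr(2)] pr(3) by blast
    then have "(\<lambda>x. relu (inner (t *\<^sub>R w) (x - q))) \<in> SN X" using SN_N[of q X "t *\<^sub>R w"] False t assms by (metis neg_equal_0_iff_equal scale_eq_0_iff less_irrefl)
    then have "(\<lambda>x. (1/t) * relu (inner (t *\<^sub>R w) (x - q))) \<in> SN X" by (rule SN_scale)
    moreover have "(1/t) * relu (inner (t *\<^sub>R w) (x - q)) = relu (inner w x - inner w q)" for x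
      using relu_scale[OF t, of "inner w x - inner w q"] t by (simp add: inner_diff_right right_diff_distrib)
    ultimately show ?thesis by simp
  next
    case 3
    define t where "t = d / (norm w)\<^sup>2"
    have t: "t > 0" using 3 nw by (simp add: t_def divide_pos_pos)
    have "(norm (q + (-t) *\<^sub>R w - p))\<^sup>2 = (norm (q - p))\<^sup>2 - t * d"
      unfolding norm_step using nw by (simp add: t_def d_def power2_eq_square field_simps)
    also have "\<dots> \<le> (norm (q - p))\<^sup>2" using t 3 by simp
    finally have "q + (- (t *\<^sub>R w)) \<in> X" using in_cball_sq[OF _ pr(2)] pr(3) by auto
    then have "(\<lambda>x. relu (inner (- (t *\<^sub>R w)) (x - q))) \<in> SN X" using SN_N[of q X "- (t *\<^sub>R w)"] False t assms by (metis neg_equal_0_iff_equal scale_eq_0_iff less_irrefl)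
    then have "(\<lambda>x. (1/t) * relu (inner (- (t *\<^sub>R w)) (x - q)) + inner w x - inner w q) \<in> SN X"
      using SN_aff[OF assms(1)] assms(2)
      by (intro SN_diff SN.add SN_scale SN.cst) auto
    moreover have "(1/t) * relu (inner (- (t *\<^sub>R w)) (x - q)) + inner w x - inner w q = relu (inner w x - inner w q)" for x
    proof -
      have "relu (inner (- (t *\<^sub>R w)) (x - q)) = t * relu (- (inner w x - inner w q))"
        using relu_scale[OF t, of "- (inner w x - inner w q)"] by (simp add: inner_diff_right right_diff_distrib)
      then show ?thesis using relu_neg[of "inner w x - inner w q"] t by simp
    qed
    ultimately show ?thesis by simp
  qed
qed


inductive_set R1 :: "real \<Rightarrow> real \<Rightarrow> (real \<Rightarrow> real) set" for a b where
  cst: "(\<lambda>_. c) \<in> R1 a b"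
| lin: "(\<lambda>t. t) \<in> R1 a b"
| rel: "c \<in> {a..b} \<Longrightarrow> (\<lambda>t. relu (t - c)) \<in> R1 a b"
| scl: "f \<in> R1 a b \<Longrightarrow> (\<lambda>t. r * f t) \<in> R1 a b"
| add: "f \<in> R1 a b \<Longrightarrow> g \<in> R1 a b \<Longrightarrow> (\<lambda>t. f t + g t) \<in> R1 a b"

lemma R1_transfer:
  assumes good: "goodX X" and X: "compact X" "X \<noteq> {}"
    and F: "F \<in> R1 (Inf ((\<lambda>x. inner w x) ` X)) (Sup ((\<lambda>x. inner w x) ` X))"
  shows "\<exists>f\<in>SN X. \<forall>x\<in>X. f x = F (inner w x)"
  using F
proof induction
  case (cst c) then show ?case using SN.cst[of c X] by auto
next
  case lin then show ?case using SN_aff[OF good X(2)] by blast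
next
  case (rel c)
  define P where "P = (\<lambda>x. inner w x) ` X"
  have Pc: "compact P" unfolding P_def
    by (intro compact_continuous_image X continuous_intros)
  have Pne: "P \<noteq> {}" using X by (simp add: P_def)
  have bdd: "bdd_above P" "bdd_below P" using Pc by (auto intro: compact_imp_bounded bounded_imp_bdd_above bounded_imp_bdd_below)
  have Kq: "\<exists>f\<in>SN X. \<forall>x\<in>X. f x = relu (inner w x - c')" if "c' \<in> P" for c'
  proof -
    from that obtain q where "q \<in> X" "c' = inner w q" by (auto simp: P_def)
    then show ?thesis using SN_K[OF good, of q w] by (intro bexI[of _ "\<lambda>x. relu (inner w x - inner w q)"]) auto
  qed
  show ?case
  proof (cases "c \<in> P")
    case True then show ?thesis using Kq by blast
  next
    case False
    define A where "A = P \<inter> {..c}"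
    define B where "B = P \<inter> {c..}"
    have "Inf P \<in> P" using Pc Pne bdd by (intro closed_contains_Inf compact_imp_closed)
    have "Sup P \<in> P" using Pc Pne bdd by (intro closed_contains_Sup compact_imp_closed)
    have cab: "Inf P \<le> c" "c \<le> Sup P" using rel by (auto simp: P_def)
    have Ane: "A \<noteq> {}" using \<open>Inf P \<in> P\<close> cab by (auto simp: A_def)
    have Bne: "B \<noteq> {}" using \<open>Sup P \<in> P\<close> cab by (auto simp: B_def)
    have Acl: "closed A" "closed B" using Pc compact_imp_closed[OF Pc] by (auto simp: A_def B_def intro!: closed_Int)
    have Abdd: "bdd_above A" "bdd_below B" using bdd by (auto simp: A_def B_def intro: bdd_above_mono bdd_below_mono)
    define c1 where "c1 = Sup A"
    define c2 where "c2 = Inf B"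
    have c1A: "c1 \<in> A" unfolding c1_def using closed_contains_Sup[OF Ane Abdd(1) Acl(1)] .
    have c2B: "c2 \<in> B" unfolding c2_def using closed_contains_Inf[OF Bne Abdd(2) Acl(2)] .
    have c1: "c1 \<in> P" "c1 < c" using c1A False by (auto simp: A_def order_le_less)
    have c2: "c2 \<in> P" "c < c2" using c2B False by (auto simp: B_def order_le_less)
    have gap: "t \<le> c1 \<or> c2 \<le> t" if "t \<in> P" for t
    proof (cases "t \<le> c")
      case True then have "t \<in> A" using that by (simp add: A_def)
      then show ?thesis using cSup_upper[OF _ Abdd(1)] by (simp add: c1_def)
    next
      case False then have "t \<in> B" using that by (simp add: B_def)
      then show ?thesis using cInf_lower[OF _ Abdd(2)] by (simp add: c2_def)
    qed
    obtain f1 where f1: "f1 \<in> SN X" "\<forall>x\<in>X. f1 x = relu (inner w x - c1)" using Kq c1 by blast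
    obtain f2 where f2: "f2 \<in> SN X" "\<forall>x\<in>X. f2 x = relu (inner w x - c2)" using Kq c2 by blast
    define l where "l = (c2 - c) / (c2 - c1)"
    have "(\<lambda>x. l * f1 x + (1 - l) * f2 x) \<in> SN X" by (intro SN.add SN_scale f1 f2)
    moreover have "l * f1 x + (1 - l) * f2 x = relu (inner w x - c)" if "x \<in> X" for x
    proof -
      have "inner w x \<in> P" using that by (simp add: P_def)
      then consider "inner w x \<le> c1" | "c2 \<le> inner w x" using gap by blast
      then show ?thesis
      proof cases
        case 1 then show ?thesis using f1 f2 that c1 c2 by (simp add: relu_def)
      next
        case 2
        have e1: "f1 x = inner w x - c1" "f2 x = inner w x - c2" using f1 f2 that 2 c1 c2 by (auto simp: relu_def)
        have e2: "relu (inner w x - c) = inner w x - c" using 2 c2 by (simp add: relu_def)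
        have "l * (inner w x - c1) + (1 - l) * (inner w x - c2) = inner w x - c"
        proof -
          have nz: "c2 - c1 \<noteq> 0" using c1 c2 by simp
          have "l * (inner w x - c1) + (1 - l) * (inner w x - c2) = inner w x - (l * c1 + (1 - l) * c2)"
            by (simp add: algebra_simps)
          moreover have "l * c1 + (1 - l) * c2 = c" unfolding l_def using nz
            by (simp add: divide_simps) (simp add: algebra_simps)
          ultimately show ?thesis by simp
        qed
        then show ?thesis using e1 e2 by simp
      qed
    qed
    ultimately show ?thesis by (intro bexI[of _ "\<lambda>x. l * f1 x + (1 - l) * f2 x"]) auto
  qed
next
  case (scl f r)
  then obtain g where "g \<in> SN X" "\<forall>x\<in>X. g x = f (inner w x)" by blast
  then show ?case using SN_scale[of g X r] by (intro bexI[of _ "\<lambda>x. r * g x"]) auto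
next
  case (add f g)
  then obtain f' g' where "f' \<in> SN X" "\<forall>x\<in>X. f' x = f (inner w x)" "g' \<in> SN X" "\<forall>x\<in>X. g' x = g (inner w x)" by blast
  then show ?case using SN.add[of f' X g'] by (intro bexI[of _ "\<lambda>x. f' x + g' x"]) auto
qed


lemma interp:
  fixes s y :: "nat \<Rightarrow> real"
  assumes mono: "\<And>j. s j < s (Suc j)" and knots: "\<And>j. j \<le> n \<Longrightarrow> s j \<in> {a..b}"
  defines "sl \<equiv> (\<lambda>j. (y (Suc j) - y j) / (s (Suc j) - s j))"
  shows "Suc k \<le> n \<Longrightarrow> \<exists>F\<in>R1 a b. \<forall>j<Suc k. \<forall>t. s j \<le> t \<and> (t \<le> s (Suc j) \<or> j = k) \<longrightarrow> F t = y j + (t - s j) * sl j"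
proof (induction k)
  case 0
  have "(\<lambda>t. y 0 + (t - s 0) * sl 0) = (\<lambda>t. (y 0 - s 0 * sl 0) + sl 0 * t)" by (auto simp: algebra_simps)
  moreover have "(\<lambda>t. (y 0 - s 0 * sl 0) + sl 0 * t) \<in> R1 a b" by (intro R1.add R1.cst R1.scl R1.lin)
  ultimately show ?case by (intro bexI[of _ "\<lambda>t. y 0 + (t - s 0) * sl 0"]) auto
next
  case (Suc k)
  then obtain G where G: "G \<in> R1 a b" "\<forall>j<Suc k. \<forall>t. s j \<le> t \<and> (t \<le> s (Suc j) \<or> j = k) \<longrightarrow> G t = y j + (t - s j) * sl j"
    by auto
  have sm: "strict_mono s" using mono by (simp add: strict_mono_Suc_iff)
  define F where "F = (\<lambda>t. G t + (sl (Suc k) - sl k) * relu (t - s (Suc k)))"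
  have "F \<in> R1 a b" unfolding F_def using knots Suc.prems by (intro R1.add G R1.scl R1.rel) auto
  moreover have "F t = y j + (t - s j) * sl j" if "j < Suc (Suc k)" "s j \<le> t" "t \<le> s (Suc j) \<or> j = Suc k" for j t
  proof (cases "j = Suc k")
    case True
    have gt: "G t = y k + (t - s k) * sl k" using G(2) that True mono[of k] by auto
    have r: "relu (t - s (Suc k)) = t - s (Suc k)" using that True by (simp add: relu_def)
    have yk: "y (Suc k) = y k + (s (Suc k) - s k) * sl k" using mono[of k] by (simp add: sl_def)
    show ?thesis by (simp only: F_def gt r yk True) (simp add: algebra_simps)
  next
    case False
    then have j: "j < Suc k" "t \<le> s (Suc j)" using that by auto
    have "s (Suc j) \<le> s (Suc k)" using j sm by (simp add: strict_mono_less_eq)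
    then have "relu (t - s (Suc k)) = 0" using j by (simp add: relu_def)
    moreover have "G t = y j + (t - s j) * sl j" using G(2) j that by auto
    ultimately show ?thesis unfolding F_def by simp
  qed
  ultimately show ?case by blast
qed

lemma convex_err:
  fixes u v l e :: real
  assumes "\<bar>u\<bar> < e" "\<bar>v\<bar> < e" "0 \<le> l" "l \<le> 1"
  shows "\<bar>(1 - l) * u + l * v\<bar> < e"
proof -
  have "\<bar>(1 - l) * u + l * v\<bar> \<le> (1 - l) * \<bar>u\<bar> + l * \<bar>v\<bar>"
    using assms by (metis abs_mult abs_of_nonneg abs_triangle_ineq diff_ge_0_iff_ge)
  also have "\<dots> \<le> (1 - l) * max \<bar>u\<bar> \<bar>v\<bar> + l * max \<bar>u\<bar> \<bar>v\<bar>"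
    using assms by (intro add_mono mult_left_mono) auto
  also have "\<dots> = max \<bar>u\<bar> \<bar>v\<bar>" by (simp add: algebra_simps)
  also have "\<dots> < e" using assms by simp
  finally show ?thesis .
qed

lemma approx1d:
  assumes ab: "a < b" and h: "continuous_on {a..b} h" and e: "e > 0"
  shows "\<exists>F\<in>R1 a b. \<forall>t\<in>{a..b}. \<bar>h t - F t\<bar> < e"
proof -
  have "uniformly_continuous_on {a..b} h" using h by (intro compact_uniformly_continuous) auto
  then obtain d where d: "d > 0" "\<And>x x'. x \<in> {a..b} \<Longrightarrow> x' \<in> {a..b} \<Longrightarrow> dist x' x < d \<Longrightarrow> dist (h x') (h x) < e"
    using e unfolding uniformly_continuous_on_def by metis
  define n where "n = nat \<lceil>(b - a) / d\<rceil> + 1"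
  have n: "n \<ge> 1" by (simp add: n_def)
  have nd: "(b - a) / n < d"
  proof -
    have "(b - a) / d < n" unfolding n_def by linarith
    then have "b - a < n * d" using d by (simp add: divide_less_eq)
    then show ?thesis using n by (simp add: divide_less_eq mult.commute)
  qed
  define hstep where "hstep = (b - a) / n"
  have hs: "hstep > 0" using ab n by (simp add: hstep_def)
  define s where "s j = a + j * hstep" for j :: nat
  define y where "y j = h (s j)" for j
  have mono: "s j < s (Suc j)" for j using hs by (simp add: s_def algebra_simps)
  have sn: "s n = b" using n by (simp add: s_def hstep_def)
  have knots: "s j \<in> {a..b}" if "j \<le> n" for j
  proof -
    have "j * hstep \<le> n * hstep" using that hs by (intro mult_right_mono) auto
    then show ?thesis using hs sn by (auto simp: s_def)
  qed
  obtain k where k: "n = Suc k" using n by (cases n) auto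
  obtain F where F: "F \<in> R1 a b" "\<forall>j<Suc k. \<forall>t. s j \<le> t \<and> (t \<le> s (Suc j) \<or> j = k) \<longrightarrow> F t = y j + (t - s j) * ((y (Suc j) - y j) / (s (Suc j) - s j))"
    using interp[of s n a b k y] mono knots k by auto
  have "\<bar>h t - F t\<bar> < e" if t: "t \<in> {a..b}" for t
  proof -
    define J where "J = {j. j < n \<and> s j \<le> t}"
    have "0 \<in> J" using t n by (simp add: J_def s_def)
    have fJ: "finite J" by (simp add: J_def)
    define j where "j = Max J"
    have jJ: "j \<in> J" using fJ \<open>0 \<in> J\<close> by (simp add: j_def) (metis Max_in empty_iff)
    have j: "j < n" "s j \<le> t" using jJ by (auto simp: J_def)
    have up: "t \<le> s (Suc j)"
    proof (cases "Suc j < n")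
      case True
      have "Suc j \<notin> J" using Max_ge[OF fJ, of "Suc j"] by (auto simp: j_def)
      then show ?thesis using True by (auto simp: J_def)
    next
      case False then have "Suc j = n" using j by simp
      then show ?thesis using sn t by simp
    qed
    have jk: "j < Suc k" using j k by simp
    have Ft: "F t = y j + (t - s j) * ((y (Suc j) - y j) / (s (Suc j) - s j))" using F(2) jk j up by blast
    have step: "s (Suc j) - s j = hstep" by (simp add: s_def algebra_simps)
    define l where "l = (t - s j) / hstep"
    have l: "0 \<le> l" "l \<le> 1" using j up hs step by (auto simp: l_def divide_simps)
    have Fl: "F t = (1 - l) * y j + l * y (Suc j)" unfolding Ft step l_def using hs by (simp add: field_simps)
    have kn: "j \<le> n" "Suc j \<le> n" using j by auto
    have "\<bar>h t - y j\<bar> < e"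
      using d(2)[OF knots[OF kn(1)] t] j up step nd hs by (simp add: y_def dist_real_def hstep_def abs_minus_commute)
    moreover have "\<bar>h t - y (Suc j)\<bar> < e"
      using d(2)[OF knots[OF kn(2)] t] j up step nd hs by (simp add: y_def dist_real_def hstep_def abs_minus_commute)
    ultimately have "\<bar>(1 - l) * (h t - y j) + l * (h t - y (Suc j))\<bar> < e" using l by (intro convex_err)
    moreover have "(1 - l) * (h t - y j) + l * (h t - y (Suc j)) = h t - F t" unfolding Fl by (simp add: algebra_simps)
    ultimately show ?thesis by simp
  qed
  then show ?thesis using F(1) by blast
qed

lemma ridge:
  assumes good: "goodX X" and X: "compact X" "X \<noteq> {}"
    and h: "continuous_on UNIV h" and e: "e > 0"
  shows "\<exists>f\<in>SN X. \<forall>x\<in>X. \<bar>h (inner w x) - f x\<bar> < e"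
proof -
  define P where "P = (\<lambda>x. inner w x) ` X"
  have Pc: "compact P" unfolding P_def
    by (intro compact_continuous_image X continuous_intros)
  have Pne: "P \<noteq> {}" using X by (simp add: P_def)
  have bdd: "bdd_above P" "bdd_below P" using Pc by (auto intro: compact_imp_bounded bounded_imp_bdd_above bounded_imp_bdd_below)
  define a where "a = Inf P"
  define b where "b = Sup P"
  have inab: "inner w x \<in> {a..b}" if "x \<in> X" for x
    using that bdd by (auto simp: a_def b_def P_def intro: cInf_lower cSup_upper)
  have "a \<le> b" using inab X by fastforce
  then consider "a = b" | "a < b" by linarith
  then show ?thesis
  proof cases
    case 1
    then have "inner w x = a" if "x \<in> X" for x using inab[OF that] by simp
    then show ?thesis using e by (intro bexI[of _ "\<lambda>_. h a"] SN.cst) auto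
  next
    case 2
    have "continuous_on {a..b} h" using h by (rule continuous_on_subset) auto
    then obtain F where F: "F \<in> R1 a b" "\<forall>t\<in>{a..b}. \<bar>h t - F t\<bar> < e" using approx1d[OF 2 _ e] by blast
    obtain f where f: "f \<in> SN X" "\<forall>x\<in>X. f x = F (inner w x)"
      using R1_transfer[OF good X, of F w] F(1) by (auto simp: a_def b_def P_def)
    show ?thesis using f F(2) inab by (intro bexI[of _ f]) auto
  qed
qed


inductive_set EXPS :: "(real^'d \<Rightarrow> real) set" where
  ecst: "(\<lambda>_. c) \<in> EXPS"
| eexp: "(\<lambda>x. c * exp (inner w x)) \<in> EXPS"
| eadd: "f \<in> EXPS \<Longrightarrow> g \<in> EXPS \<Longrightarrow> (\<lambda>x. f x + g x) \<in> EXPS"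

lemma EXPS_scale: "f \<in> EXPS \<Longrightarrow> (\<lambda>x. r * f x) \<in> EXPS"
proof (induction rule: EXPS.induct)
  case (ecst c) then show ?case using EXPS.ecst by blast
next
  case (eexp c w) then show ?case using EXPS.eexp[of "r * c" w] by (simp add: mult.assoc)
next
  case (eadd f g) then show ?case using EXPS.eadd[OF eadd(3,4)] by (simp add: distrib_left)
qed

lemma EXPS_mult_exp: "g \<in> EXPS \<Longrightarrow> (\<lambda>x. (c * exp (inner w x)) * g x) \<in> EXPS"
proof (induction rule: EXPS.induct)
  case (ecst c')
  then show ?case using EXPS.eexp[of "c * c'" w] by (simp add: algebra_simps)
next
  case (eexp c' w')
  have "(\<lambda>x. (c * exp (inner w x)) * (c' * exp (inner w' x))) = (\<lambda>x. (c * c') * exp (inner (w + w') x))"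
    by (auto simp: inner_add_left exp_add algebra_simps)
  then show ?case using EXPS.eexp[of "c * c'" "w + w'"] by simp
next
  case (eadd f g) then show ?case using EXPS.eadd[OF eadd(3,4)] by (simp add: distrib_left)
qed

lemma EXPS_mult: "f \<in> EXPS \<Longrightarrow> g \<in> EXPS \<Longrightarrow> (\<lambda>x. f x * g x) \<in> EXPS"
proof (induction rule: EXPS.induct)
  case (ecst c) then show ?case using EXPS_scale by blast
next
  case (eexp c w) then show ?case using EXPS_mult_exp by blast
next
  case (eadd f1 f2) then show ?case using EXPS.eadd[of "\<lambda>x. f1 x * g x" "\<lambda>x. f2 x * g x"] by (simp add: distrib_right)
qed

lemma EXPS_cont: "f \<in> EXPS \<Longrightarrow> continuous_on S f"
  by (induction rule: EXPS.induct) (auto intro!: continuous_intros)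

lemma EXPS_ring: "compact X \<Longrightarrow> function_ring_on EXPS X"
proof (unfold_locales)
  fix x y :: "real^'d" assume "x \<noteq> y"
  define w where "w = x - y"
  have "inner w x - inner w y = (norm w)\<^sup>2" by (simp add: w_def power2_norm_eq_inner inner_diff_right inner_diff_left inner_commute)
  then have "inner w x \<noteq> inner w y" using \<open>x \<noteq> y\<close> by (auto simp: w_def)
  then have "exp (inner w x) \<noteq> exp (inner w y)" by simp
  then show "\<exists>f\<in>EXPS. f x \<noteq> f y" using EXPS.eexp[of 1 w] by force
qed (auto intro: EXPS_cont EXPS.eadd EXPS_mult EXPS.ecst)

lemma EXPS_approx:
  assumes good: "goodX X" and X: "compact X" "X \<noteq> {}"
  shows "f \<in> EXPS \<Longrightarrow> e > 0 \<Longrightarrow> \<exists>s\<in>SN X. \<forall>x\<in>X. \<bar>f x - s x\<bar> < e"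
proof (induction arbitrary: e rule: EXPS.induct)
  case (ecst c) then show ?case by (intro bexI[of _ "\<lambda>_. c"] SN.cst) auto
next
  case (eexp c w)
  have "continuous_on UNIV (\<lambda>t. c * exp t)" by (intro continuous_intros)
  from ridge[OF good X this eexp, of w] show ?case by simp
next
  case (eadd f g)
  obtain s1 where s1: "s1 \<in> SN X" "\<forall>x\<in>X. \<bar>f x - s1 x\<bar> < e/2" using eadd(3)[of "e/2"] eadd(5) by auto
  obtain s2 where s2: "s2 \<in> SN X" "\<forall>x\<in>X. \<bar>g x - s2 x\<bar> < e/2" using eadd(4)[of "e/2"] eadd(5) by auto
  have "\<bar>f x + g x - (s1 x + s2 x)\<bar> < e" if "x \<in> X" for x
  proof -
    have eq: "\<bar>f x + g x - (s1 x + s2 x)\<bar> = \<bar>(f x - s1 x) + (g x - s2 x)\<bar>" by (simp add: algebra_simps)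
    have a: "\<bar>f x - s1 x\<bar> < e/2" "\<bar>g x - s2 x\<bar> < e/2" using s1(2) s2(2) that by auto
    show ?thesis using eq a abs_triangle_ineq[of "f x - s1 x" "g x - s2 x"] by linarith
  qed
  then show ?case using SN.add[OF s1(1) s2(1)] by (intro bexI[of _ "\<lambda>x. s1 x + s2 x"]) auto
qed

lemma scalar_univ:
  assumes good: "goodX X" and X: "compact X" "X \<noteq> {}"
    and g: "continuous_on X g" and e: "e > 0"
  shows "\<exists>s\<in>SN X. \<forall>x\<in>X. \<bar>g x - s x\<bar> < e"
proof -
  interpret function_ring_on EXPS X using EXPS_ring[OF X(1)] .
  obtain f where f: "f \<in> EXPS" "\<forall>x\<in>X. \<bar>g x - f x\<bar> < e/2" using Stone_Weierstrass_basic[OF g, of "e/2"] e by auto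
  obtain s where s: "s \<in> SN X" "\<forall>x\<in>X. \<bar>f x - s x\<bar> < e/2" using EXPS_approx[OF good X f(1), of "e/2"] e by auto
  have "\<bar>g x - s x\<bar> < e" if "x \<in> X" for x
  proof -
    have eq: "\<bar>g x - s x\<bar> = \<bar>(g x - f x) + (f x - s x)\<bar>" by simp
    have a: "\<bar>g x - f x\<bar> < e/2" "\<bar>f x - s x\<bar> < e/2" using f(2) s(2) that by auto
    show ?thesis using eq a abs_triangle_ineq[of "g x - f x" "f x - s x"] by linarith
  qed
  then show ?thesis using s(1) by blast
qed


theorem theorem4:
  fixes X' :: "(real^'d) set" and \<epsilon>I :: real and g :: "real^'d \<Rightarrow> real^'m" and \<epsilon> :: real
  assumes "compact X'" and "X' \<noteq> {}"
    and "reach X' > 0"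
    and "0 < \<epsilon>I" and "ereal \<epsilon>I < reach X'" and "\<epsilon>I < 1"
    and "continuous_on {x. infdist x X' \<le> \<epsilon>I} g"
    and "\<epsilon> > 0"
  shows "\<exists>\<Phi>. is_sampled_network {x. infdist x X' \<le> \<epsilon>I} \<Phi> \<and>
           (SUP x\<in>{x. infdist x X' \<le> \<epsilon>I}. norm (g x - \<Phi> x)) < \<epsilon>"
proof -
  define X where "X = {x. infdist x X' \<le> \<epsilon>I}"
  have clX': "closed X'" using assms(1) by (rule compact_imp_closed)
  have Xne: "X \<noteq> {}"
  proof -
    obtain p where "p \<in> X'" using assms(2) by auto
    then show ?thesis using assms(4) by (auto simp: X_def intro!: exI[of _ p])
  qed
  have Xcl: "closed X" unfolding X_def
    by (intro closed_Collect_le continuous_intros)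
  obtain R where R: "\<And>y. y \<in> X' \<Longrightarrow> norm y \<le> R"
    using compact_imp_bounded[OF assms(1)] by (auto simp: bounded_iff)
  have Xb: "bounded X"
  proof -
    have "norm x \<le> R + \<epsilon>I" if "x \<in> X" for x
    proof -
      obtain y where y: "y \<in> X'" "infdist x X' = dist x y" using infdist_attains_inf[OF clX' assms(2)] by metis
      have "norm x \<le> norm y + dist x y" by (metis dist_norm norm_triangle_sub add.commute)
      then show ?thesis using R[OF y(1)] y that by (simp add: X_def)
    qed
    then show ?thesis by (auto simp: bounded_iff)
  qed
  have Xc: "compact X" using Xcl Xb by (simp add: compact_eq_bounded_closed)
  have good: "goodX X" unfolding goodX_def
  proof
    fix q assume q: "q \<in> X"
    obtain p where p: "p \<in> X'" "infdist q X' = dist q p" using infdist_attains_inf[OF clX' assms(2)] by metis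
    have "q \<in> cball p \<epsilon>I" using p q by (simp add: X_def dist_commute)
    moreover have "cball p \<epsilon>I \<subseteq> X"
    proof
      fix y assume "y \<in> cball p \<epsilon>I"
      then have "dist y p \<le> \<epsilon>I" by (simp add: dist_commute)
      moreover have "infdist y X' \<le> dist y p" using p(1) by (rule infdist_le)
      ultimately show "y \<in> X" by (simp add: X_def)
    qed
    ultimately show "\<exists>p r. r > 0 \<and> q \<in> cball p r \<and> cball p r \<subseteq> X" using assms(4) by blast
  qed
  define e where "e = \<epsilon> / (2 * CARD('m))"
  have e: "e > 0" using assms(8) by (simp add: e_def)
  have "\<forall>j. \<exists>s. s \<in> SN X \<and> (\<forall>x\<in>X. \<bar>g x $ j - s x\<bar> < e)"
  proof
    fix j :: 'm
    have "continuous_on X (\<lambda>x. g x $ j)" using assms(7) unfolding X_def by (intro continuous_intros)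
    then show "\<exists>s. s \<in> SN X \<and> (\<forall>x\<in>X. \<bar>g x $ j - s x\<bar> < e)" using scalar_univ[OF good Xc Xne _ e] by blast
  qed
  then obtain S where S: "\<And>j. S j \<in> SN X" "\<And>j x. x \<in> X \<Longrightarrow> \<bar>g x $ j - S j x\<bar> < e" by metis
  define \<Phi> where "\<Phi> = (\<lambda>x. \<Sum>j\<in>UNIV. S j x *\<^sub>R (axis j 1 :: real^'m))"
  have "\<Phi> \<in> NN X" unfolding \<Phi>_def by (intro NN_sum SN_NN S) auto
  then have net: "is_sampled_network X \<Phi>" by (rule NN_sampled)
  have comp: "\<Phi> x $ i = S i x" for x i
  proof -
    have "\<Phi> x $ i = (\<Sum>j\<in>UNIV. S j x * (axis j 1 :: real^'m) $ i)" by (simp add: \<Phi>_def)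
    also have "\<dots> = (\<Sum>j\<in>UNIV. if j = i then S j x else 0)" by (intro sum.cong) (auto simp: axis_def)
    also have "\<dots> = S i x" by simp
    finally show ?thesis .
  qed
  have bound: "norm (g x - \<Phi> x) \<le> \<epsilon> / 2" if "x \<in> X" for x
  proof -
    have "norm (g x - \<Phi> x) \<le> (\<Sum>i\<in>UNIV. \<bar>(g x - \<Phi> x) $ i\<bar>)" by (rule norm_le_l1_cart)
    also have "\<dots> \<le> (\<Sum>i\<in>(UNIV::'m set). e)"
      using S(2)[OF that] by (intro sum_mono) (simp add: comp less_imp_le)
    also have "\<dots> = \<epsilon> / 2" by (simp add: e_def)
    finally show ?thesis .
  qed
  have "(SUP x\<in>X. norm (g x - \<Phi> x)) \<le> \<epsilon> / 2" using Xne bound by (intro cSUP_least) auto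
  also have "\<dots> < \<epsilon>" using assms(8) by simp
  finally show ?thesis using net unfolding X_def by blast
qed

end
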